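(* Let $\alpha>2$, and for $s_1,s_2>0$ define \[ f(s_1,s_2)=\frac{\int_0^\infty e^{-(s_1+s_2)x^{2/\alpha}}\frac{dx}{1+x}}{s_1\int_0^\infty x^{2/\alpha}e^{-(s_1+s_2)x^{2/\alpha}}\frac{dx}{1+x}}. \] Then the function $s\mapsto f(s,s)$ is monotonically decreasing on $(0,\infty)$. *)

theory Defs
  imports "HOL-Analysis.Analysis"
begin

definition num_int :: "real \<Rightarrow> real \<Rightarrow> real \<Rightarrow> real" where
  "num_int \<alpha> s1 s2 = (LBINT x:{0<..}. exp (-(s1+s2) * x powr (2/\<alpha>)) / (1 + x))"

definition den_int :: "real \<Rightarrow> real \<Rightarrow> real \<Rightarrow> real" where
  "den_int \<alpha> s1 s2 = (LBINT x:{0<..}. x powr (2/\<alpha>) * exp (-(s1+s2) * x powr (2/\<alpha>)) / (1 + x))"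

definition f_ratio :: "real \<Rightarrow> real \<Rightarrow> real \<Rightarrow> real" where
  "f_ratio \<alpha> s1 s2 = num_int \<alpha> s1 s2 / (s1 * den_int \<alpha> s1 s2)"

end

theory Submission
  imports Defs
begin

lemma core_bound:
  fixes b t x :: real
  assumes b: "b > 0" and t: "t > 0" and x: "x > 0"
  defines "n \<equiv> nat \<lceil>1 + 1/b\<rceil>"
  shows "(1 + x powr b) * (1 + x) * exp (-t * x powr b) \<le> 4 + 4 * (real n / t) ^ n"
proof (cases "x \<le> 1")
  case True
  have "x powr b \<le> 1" using True x b by (simp add: powr_le1)
  moreover have "exp (-t * x powr b) \<le> 1" using t x by simp
  ultimately have "(1 + x powr b) * (1 + x) * exp (-t * x powr b) \<le> 2 * 2 * 1"
    using True x by (intro mult_mono) auto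
  moreover have "0 \<le> 4 * (real n / t) ^ n" using t by simp
  ultimately show ?thesis by linarith
next
  case False
  define u where "u = x powr b"
  have u1: "u \<ge> 1" using False b unfolding u_def by (simp add: ge_one_powr_ge_zero)
  have n: "real n \<ge> 1 + 1/b" unfolding n_def by (rule real_nat_ceiling_ge)
  have npos: "n > 0" using n b
  proof -
    have "1/b > 0" using b by simp
    then have "real n > 0" using n by linarith
    then show ?thesis by simp
  qed
  have "real n * b \<ge> b + 1" using n b by (simp add: field_simps)
  hence "x powr (b+1) \<le> x powr (real n * b)" using False by (intro powr_mono) auto
  also have "x powr (real n * b) = u ^ n" unfolding u_def
    using x by (simp add: powr_powr[symmetric] powr_realpow mult.commute)
  finally have uxn: "u * x \<le> u ^ n" unfolding u_def using x by (simp add: powr_add)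
  have "(t*u / real n) ^ n \<le> (1 + t*u/real n) ^ n"
    using t u1 npos by (intro power_mono) auto
  also have "\<dots> \<le> exp (t*u)"
  proof (intro exp_ge_one_plus_x_over_n_power_n)
    have "t * u \<ge> 0" using t u1 by simp
    then show "t * u \<ge> - real n" by linarith
  qed (use npos in auto)
  finally have e: "(t / real n) ^ n * u ^ n \<le> exp (t*u)"
    by (simp add: power_divide power_mult_distrib)
  have "(1 + u) * (1 + x) \<le> (2*u) * (2*x)" using u1 False by (intro mult_mono) auto
  also have "\<dots> \<le> 4 * u ^ n" using uxn by simp
  finally have a: "(1 + u) * (1 + x) \<le> 4 * u ^ n" .
  have tn: "(t / real n) ^ n > 0" using t npos by simp
  have un: "u ^ n > 0" using u1 by simp
  have "(1 + u) * (1 + x) * exp (-t * u) = (1 + u) * (1 + x) / exp (t*u)"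
    by (simp add: exp_minus field_simps)
  also have "\<dots> \<le> 4 * u ^ n / ((t / real n) ^ n * u ^ n)"
    using a e tn un by (intro frac_le) auto
  also have "\<dots> = 4 * (real n / t) ^ n" using tn un t npos u1
    by (simp add: field_simps power_divide)
  finally show ?thesis unfolding u_def using t by simp
qed

lemma maj_HK: "((\<lambda>x::real. 1/(1+x)^2) has_integral 1) {0..}"
proof (rule has_integral_to_inf)
  show "(\<lambda>x::real. 1/(1+x)^2) integrable_on {0..y}" for y
    by (intro integrable_continuous_interval continuous_intros) auto
  have "((\<lambda>x::real. 1/(1+x)^2) has_integral ((-1/(1+y)) - (-1/(1+0)))) {0..y}" if "y \<ge> 0" for y::real
    using that
    by (intro fundamental_theorem_of_calculus)
       (auto intro!: derivative_eq_intros simp: power2_eq_square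
               simp flip: has_real_derivative_iff_has_vector_derivative)
  then have "\<forall>\<^sub>F y in at_top. integral {0..y} (\<lambda>x::real. 1/(1+x)^2) = 1 - 1/(1+y)"
    by (intro eventually_at_top_linorderI[of 0]) (auto dest: integral_unique)
  moreover have "((\<lambda>y::real. 1 - 1/(1+y)) \<longlongrightarrow> 1) at_top"
    by real_asymp
  ultimately show "((\<lambda>y. integral {0..y} (\<lambda>x::real. 1/(1+x)^2)) \<longlongrightarrow> 1) at_top"
    by (simp add: filterlim_cong)
qed auto

lemma maj: "set_integrable lborel {0<..} (\<lambda>x::real. 1/(1+x)^2)"
proof -
  have "(\<lambda>x::real. 1/(1+x)^2) absolutely_integrable_on {0..}"
    using maj_HK by (intro nonnegative_absolutely_integrable_1) (auto simp: has_integral_integrable)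
  then have "set_integrable lebesgue {0<..} (\<lambda>x::real. 1/(1+x)^2)"
    by (rule set_integrable_subset) auto
  then show ?thesis
    unfolding set_integrable_def
    by (subst (asm) integrable_completion) auto
qed

lemma bound_int:
  fixes b t L :: real and h :: "real \<Rightarrow> real"
  assumes b: "b > 0" and t: "t > 0" and L: "L \<ge> 1"
    and h: "\<And>x. x > 0 \<Longrightarrow> 0 \<le> h x \<and> h x \<le> (1 + x powr b) * exp (-t * x powr b) / (L + x)"
    and meas: "set_borel_measurable lborel {0<..} h"
  shows "set_integrable lborel {0<..} h"
proof -
  define n where "n = nat \<lceil>1 + 1/b\<rceil>"
  define K where "K = 4 + 4 * (real n / t) ^ n"
  have Kint: "set_integrable lborel {0<..} (\<lambda>x::real. K * (1/(1+x)^2))"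
    by (intro set_integrable_mult_right maj)
  show ?thesis
  proof (rule set_integrable_bound[OF Kint meas], rule AE_I2, intro impI)
    fix x :: real assume x: "x \<in> {0<..}"
    hence x0: "x > 0" by simp
    have "h x \<le> (1 + x powr b) * exp (-t * x powr b) / (L + x)" using h x0 by blast
    also have "\<dots> \<le> (1 + x powr b) * exp (-t * x powr b) / (1 + x)"
      using x0 L by (intro divide_left_mono) (auto intro!: mult_nonneg_nonneg mult_pos_pos)
    also have "\<dots> = ((1 + x powr b) * exp (-t * x powr b) * (1 + x)) / ((1 + x) * (1+x))"
      using x0 by (intro nonzero_mult_divide_mult_cancel_right[symmetric]) simp
    also have "\<dots> = (1 + x powr b) * (1 + x) * exp (-t * x powr b) / (1+x)^2"
      by (simp only: power2_eq_square mult_ac)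
    also have "\<dots> \<le> K / (1+x)^2"
      using core_bound[OF b t x0] x0 unfolding K_def n_def by (intro divide_right_mono) auto
    finally have "h x \<le> K / (1+x)^2" .
    moreover have "0 \<le> h x" using h x0 by blast
    moreover have "K \<ge> 0" unfolding K_def using t by simp
    ultimately show "norm (h x) \<le> norm (K * (1/(1+x)^2))" by simp
  qed
qed

lemma integr:
  fixes b t L :: real
  assumes b: "b > 0" and t: "t > 0" and L: "L \<ge> 1"
  shows "set_integrable lborel {0<..} (\<lambda>x. exp (-t * x powr b) / (L + x))" (is ?A)
    and "set_integrable lborel {0<..} (\<lambda>x. x powr b * exp (-t * x powr b) / (L + x))" (is ?B)
proof -
  show ?A
  proof (rule bound_int[OF b t L])
    fix x :: real assume x: "x > 0"
    show "0 \<le> exp (-t * x powr b) / (L + x) \<and> exp (-t * x powr b) / (L + x) \<le> (1 + x powr b) * exp (-t * x powr b) / (L + x)"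
    proof
      have "L + x > 0" using x L by simp
      then show "0 \<le> exp (-t * x powr b) / (L + x)" by simp
      have "exp (-t * x powr b) \<le> (1 + x powr b) * exp (-t * x powr b)"
        by (simp add: distrib_right)
      then show "exp (-t * x powr b) / (L + x) \<le> (1 + x powr b) * exp (-t * x powr b) / (L + x)"
        using \<open>L + x > 0\<close> by (simp add: divide_right_mono)
    qed
  next
    show "set_borel_measurable lborel {0<..} (\<lambda>x. exp (-t * x powr b) / (L + x))"
      unfolding set_borel_measurable_def by measurable
  qed
  show ?B
  proof (rule bound_int[OF b t L])
    fix x :: real assume x: "x > 0"
    show "0 \<le> x powr b * exp (-t * x powr b) / (L + x) \<and> x powr b * exp (-t * x powr b) / (L + x) \<le> (1 + x powr b) * exp (-t * x powr b) / (L + x)"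
    proof
      have "L + x > 0" using x L by simp
      then show "0 \<le> x powr b * exp (-t * x powr b) / (L + x)" by simp
      have "x powr b * exp (-t * x powr b) \<le> (1 + x powr b) * exp (-t * x powr b)"
        by (simp add: distrib_right)
      then show "x powr b * exp (-t * x powr b) / (L + x) \<le> (1 + x powr b) * exp (-t * x powr b) / (L + x)"
        using \<open>L + x > 0\<close> by (simp add: divide_right_mono)
    qed
  next
    show "set_borel_measurable lborel {0<..} (\<lambda>x. x powr b * exp (-t * x powr b) / (L + x))"
      unfolding set_borel_measurable_def by measurable
  qed
qed


lemma int_pos:
  fixes h :: "real \<Rightarrow> real" and c :: real
  assumes int: "set_integrable lborel {0<..} h" and nn: "\<And>x. x > 0 \<Longrightarrow> 0 \<le> h x"
    and lb: "\<And>x. x \<in> {1..2} \<Longrightarrow> c \<le> h x" and c: "c > 0"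
  shows "0 < (LINT x:{0<..}|lborel. h x)"
proof -
  have i1: "set_integrable lborel {1..2} h" by (rule set_integrable_subset[OF int]) auto
  have i2: "set_integrable lborel ({0<..} - {1..2}) h" by (rule set_integrable_subset[OF int]) auto
  have "(LINT x:({1..2} \<union> ({0<..} - {1..2}))|lborel. h x) = (LINT x:{1..2}|lborel. h x) + (LINT x:({0<..}-{1..2})|lborel. h x)"
    by (rule set_integral_Un[OF _ i1 i2]) auto
  moreover have "{1..2} \<union> ({0<..} - {1..2}) = {0::real<..}" by auto
  ultimately have split: "(LINT x:{0<..}|lborel. h x) = (LINT x:{1..2}|lborel. h x) + (LINT x:({0<..}-{1..2})|lborel. h x)"
    by simp
  have "0 \<le> (LINT x:({0<..}-{1..2})|lborel. h x)"
    unfolding set_lebesgue_integral_def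
    by (rule Bochner_Integration.integral_nonneg) (auto simp: nn split: split_indicator)
  moreover have ci: "set_integrable lborel {1..2::real} (\<lambda>_. c)"
    by (simp add: set_integrable_def)
  have "(LINT x:{1..2::real}|lborel. c) \<le> (LINT x:{1..2}|lborel. h x)"
    by (rule set_integral_mono[OF ci i1 lb])
  moreover have "(LINT x:{1..2::real}|lborel. c) = c"
    by (subst set_integral_const) auto
  ultimately show ?thesis using split c by linarith
qed


lemma scale_gen:
  fixes G :: "real \<Rightarrow> real" and mu :: real
  assumes mu: "mu > 0"
  shows "(LBINT u:{0<..}. G u) = (LBINT x:{0<..}. mu * G (mu * x))"
proof -
  have "(LBINT u:{0<..}. G u) = (\<integral>u. indicator {0<..} u *\<^sub>R G u \<partial>lborel)"
    by (simp add: set_lebesgue_integral_def)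
  also have "\<dots> = \<bar>mu\<bar> *\<^sub>R (\<integral>x. indicator {0<..} (0 + mu * x) *\<^sub>R G (0 + mu * x) \<partial>lborel)"
    using mu by (intro lborel_integral_real_affine) simp
  also have "\<dots> = (\<integral>x. mu *\<^sub>R (indicator {0<..} (0 + mu * x) *\<^sub>R G (0 + mu * x)) \<partial>lborel)"
    using mu by simp
  also have "\<dots> = (\<integral>x. indicator {0<..} x *\<^sub>R (mu * G (mu * x)) \<partial>lborel)"
    using mu by (intro Bochner_Integration.integral_cong) (auto simp: indicator_def zero_less_mult_iff)
  also have "\<dots> = (LBINT x:{0<..}. mu * G (mu * x))"
    by (simp only: set_lebesgue_integral_def)
  finally show ?thesis .
qed

lemma scale:
  fixes b t t' :: real
  assumes b: "b > 0" and t: "t > 0" and t': "t' > 0"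
  defines "lam \<equiv> (t'/t) powr (1/b)"
  shows "(LBINT x:{0<..}. exp (-t' * x powr b) / (1 + x)) = (LBINT x:{0<..}. exp (-t * x powr b) / (lam + x))"
    and "t' * (LBINT x:{0<..}. x powr b * exp (-t' * x powr b) / (1 + x)) = t * (LBINT x:{0<..}. x powr b * exp (-t * x powr b) / (lam + x))"
proof -
  define mu where "mu = 1 / lam"
  have lam0: "lam > 0" unfolding lam_def using t t' by simp
  have mu0: "mu > 0" unfolding mu_def using lam0 by simp
  have lamb: "lam powr b = t'/t" unfolding lam_def using t t' b by (simp add: powr_powr)
  have mub: "mu powr b = t/t'" unfolding mu_def using lam0 lamb by (simp add: powr_divide)
  have pw: "(mu * x) powr b = (t/t') * x powr b" if "x > 0" for x
    using that mu0 mub by (simp add: powr_mult)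
  have fr: "mu / (1 + mu * x) = 1 / (lam + x)" if "x > 0" for x
    unfolding mu_def using lam0 that by (simp add: field_simps)
  show "(LBINT x:{0<..}. exp (-t' * x powr b) / (1 + x)) = (LBINT x:{0<..}. exp (-t * x powr b) / (lam + x))"
  proof -
    have "(LBINT x:{0<..}. exp (-t' * x powr b) / (1 + x)) = (LBINT x:{0<..}. mu * (exp (-t' * (mu*x) powr b) / (1 + mu*x)))"
      by (rule scale_gen[OF mu0])
    also have "\<dots> = (LBINT x:{0<..}. exp (-t * x powr b) / (lam + x))"
    proof (rule set_lebesgue_integral_cong, simp, intro allI impI)
      fix x :: real assume "x \<in> {0<..}"
      hence x: "x > 0" by simp
      have "mu * (exp (-t' * (mu*x) powr b) / (1 + mu*x)) = exp (-t' * (mu*x) powr b) * (mu / (1 + mu*x))"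
        by simp
      also have "\<dots> = exp (-t * x powr b) / (lam + x)"
        using t' by (simp add: pw[OF x] fr[OF x])
      finally show "mu * (exp (-t' * (mu*x) powr b) / (1 + mu*x)) = exp (-t * x powr b) / (lam + x)" .
    qed
    finally show ?thesis .
  qed
  show "t' * (LBINT x:{0<..}. x powr b * exp (-t' * x powr b) / (1 + x)) = t * (LBINT x:{0<..}. x powr b * exp (-t * x powr b) / (lam + x))"
  proof -
    have "(LBINT x:{0<..}. x powr b * exp (-t' * x powr b) / (1 + x)) = (LBINT x:{0<..}. mu * ((mu*x) powr b * exp (-t' * (mu*x) powr b) / (1 + mu*x)))"
      by (rule scale_gen[OF mu0])
    also have "\<dots> = (LBINT x:{0<..}. (t/t') * (x powr b * exp (-t * x powr b) / (lam + x)))"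
    proof (rule set_lebesgue_integral_cong, simp, intro allI impI)
      fix x :: real assume "x \<in> {0<..}"
      hence x: "x > 0" by simp
      have "mu * ((mu*x) powr b * exp (-t' * (mu*x) powr b) / (1 + mu*x)) = (mu*x) powr b * exp (-t' * (mu*x) powr b) * (mu / (1 + mu*x))"
        by simp
      also have "\<dots> = (t/t') * (x powr b * exp (-t * x powr b) / (lam + x))"
        using t' by (simp add: pw[OF x] fr[OF x])
      finally show "mu * ((mu*x) powr b * exp (-t' * (mu*x) powr b) / (1 + mu*x)) = (t/t') * (x powr b * exp (-t * x powr b) / (lam + x))" .
    qed
    also have "\<dots> = (t/t') * (LBINT x:{0<..}. x powr b * exp (-t * x powr b) / (lam + x))"
      by (rule set_integral_mult_right)
    finally show ?thesis using t' by simp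
  qed
qed


lemma pos_PQ:
  fixes b t L :: real
  assumes b: "b > 0" and t: "t > 0" and L: "L \<ge> 1"
  shows "0 < (LBINT x:{0<..}. exp (-t * x powr b) / (L + x))"
    and "0 < (LBINT x:{0<..}. x powr b * exp (-t * x powr b) / (L + x))"
proof -
  define c where "c = exp (-t * 2 powr b) / (L + 2)"
  have c: "c > 0" unfolding c_def using L by simp
  have e: "exp (-t * 2 powr b) \<le> exp (-t * x powr b)" if "x \<in> {1..2}" for x :: real
    using that t b by (auto intro!: mult_left_mono powr_mono2)
  have lb1: "c \<le> exp (-t * x powr b) / (L + x)" if "x \<in> {1..2}" for x :: real
    unfolding c_def using that L e[OF that] by (intro frac_le) auto
  show "0 < (LBINT x:{0<..}. exp (-t * x powr b) / (L + x))"
  proof (rule int_pos[OF integr(1)[OF b t L] _ lb1 c])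
    fix x :: real assume "x > 0" thus "0 \<le> exp (-t * x powr b) / (L + x)" using L by simp
  qed
  show "0 < (LBINT x:{0<..}. x powr b * exp (-t * x powr b) / (L + x))"
  proof (rule int_pos[OF integr(2)[OF b t L] _ _ c])
    fix x :: real assume "x > 0" thus "0 \<le> x powr b * exp (-t * x powr b) / (L + x)" using L by simp
  next
    fix x :: real assume x: "x \<in> {1..2}"
    have "1 \<le> x powr b" using x b by (simp add: ge_one_powr_ge_zero)
    hence "exp (-t * x powr b) / (L + x) \<le> x powr b * (exp (-t * x powr b) / (L + x))"
    proof -
      have "1 * (exp (-t * x powr b) / (L + x)) \<le> x powr b * (exp (-t * x powr b) / (L + x))"
        by (rule mult_right_mono) (use \<open>1 \<le> x powr b\<close> x L in auto)
      thus ?thesis by simp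
    qed
    thus "c \<le> x powr b * exp (-t * x powr b) / (L + x)" using lb1[OF x] by simp
  qed
qed

lemma rho_mono:
  fixes lam x y :: real
  assumes "lam \<ge> 1" "0 \<le> x" "x \<le> y"
  shows "(1 + x) / (lam + x) \<le> (1 + y) / (lam + y)"
proof -
  have "(1+y)*(lam+x) - (1+x)*(lam+y) = (lam-1)*(y-x)" by (simp add: algebra_simps)
  moreover have "(lam-1)*(y-x) \<ge> 0" using assms by simp
  ultimately have "(1+x)*(lam+y) \<le> (1+y)*(lam+x)" by linarith
  moreover have "lam + x > 0" "lam + y > 0" using assms by auto
  ultimately show ?thesis by (simp add: field_simps)
qed

lemma alg: fixes A B E u m r0 :: real shows "A \<noteq> 0 \<Longrightarrow> B \<noteq> 0 \<Longrightarrow> E/A*((u-m)*(A/B - r0)) = (u*E/B - m*(E/B)) - (r0*(u*E/A) - m*r0*(E/A))"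
  by (simp add: field_simps)

lemma cheb:
  fixes b t lam :: real
  assumes b: "b > 0" and t: "t > 0" and lam: "lam \<ge> 1"
  defines "P1 \<equiv> (LBINT x:{0<..}. exp (-t * x powr b) / (1 + x))"
    and "Q1 \<equiv> (LBINT x:{0<..}. x powr b * exp (-t * x powr b) / (1 + x))"
    and "PL \<equiv> (LBINT x:{0<..}. exp (-t * x powr b) / (lam + x))"
    and "QL \<equiv> (LBINT x:{0<..}. x powr b * exp (-t * x powr b) / (lam + x))"
  shows "PL * Q1 \<le> P1 * QL"
proof -
  have one: "(1::real) \<ge> 1" by simp
  note iP1 = integr(1)[OF b t one] and iQ1 = integr(2)[OF b t one]
    and iPL = integr(1)[OF b t lam] and iQL = integr(2)[OF b t lam]
  have P1: "P1 > 0" unfolding P1_def using pos_PQ(1)[OF b t one] .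
  have Q1: "Q1 > 0" unfolding Q1_def using pos_PQ(2)[OF b t one] .
  define m where "m = Q1 / P1"
  have m: "m > 0" unfolding m_def using P1 Q1 by simp
  define x0 where "x0 = m powr (1/b)"
  have x0: "x0 > 0" unfolding x0_def using m by simp
  have x0b: "x0 powr b = m" unfolding x0_def using m b by (simp add: powr_powr)
  define r0 where "r0 = (1 + x0) / (lam + x0)"
  define F where "F = (\<lambda>x::real. exp (-t * x powr b) / (1 + x) * ((x powr b - m) * ((1 + x) / (lam + x) - r0)))"
  have Fnn: "0 \<le> F x" if x: "x > 0" for x
  proof -
    have "0 \<le> (x powr b - m) * ((1 + x) / (lam + x) - r0)"
    proof (cases "x \<le> x0")
      case True
      have "x powr b \<le> x0 powr b" using True x b by (intro powr_mono2) auto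
      moreover have "(1 + x) / (lam + x) \<le> r0" unfolding r0_def using True x lam by (intro rho_mono) auto
      ultimately show ?thesis using x0b by (intro mult_nonpos_nonpos) auto
    next
      case False
      have "x0 powr b \<le> x powr b" using False x0 b by (intro powr_mono2) auto
      moreover have "r0 \<le> (1 + x) / (lam + x)" unfolding r0_def using False x0 lam by (intro rho_mono) auto
      ultimately show ?thesis using x0b by (intro mult_nonneg_nonneg) auto
    qed
    moreover have "0 \<le> exp (-t * x powr b) / (1 + x)" using x by simp
    ultimately show ?thesis unfolding F_def by (rule mult_nonneg_nonneg[rotated])
  qed
  have Feq: "F x = (x powr b * exp (-t * x powr b) / (lam + x) - m * (exp (-t * x powr b) / (lam + x)))
      - (r0 * (x powr b * exp (-t * x powr b) / (1 + x)) - (m * r0) * (exp (-t * x powr b) / (1 + x)))"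
    if x: "x > 0" for x
  proof -
    have "1 + x \<noteq> 0" "lam + x \<noteq> 0" using x lam by auto
    thus ?thesis unfolding F_def by (rule alg)
  qed
  have "(LBINT x:{0<..}. F x) = (LBINT x:{0<..}. (x powr b * exp (-t * x powr b) / (lam + x) - m * (exp (-t * x powr b) / (lam + x)))
      - (r0 * (x powr b * exp (-t * x powr b) / (1 + x)) - (m * r0) * (exp (-t * x powr b) / (1 + x))))"
    by (rule set_lebesgue_integral_cong) (auto simp: Feq)
  also have "\<dots> = (QL - m * PL) - (r0 * Q1 - (m * r0) * P1)"
  proof -
    have i1: "set_integrable lborel {0<..} (\<lambda>x. m * (exp (-t * x powr b) / (lam + x)))"
      by (intro set_integrable_mult_right iPL)
    have i3: "set_integrable lborel {0<..} (\<lambda>x. r0 * (x powr b * exp (-t * x powr b) / (1 + x)))"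
      by (intro set_integrable_mult_right iQ1)
    have i4: "set_integrable lborel {0<..} (\<lambda>x. (m * r0) * (exp (-t * x powr b) / (1 + x)))"
      by (intro set_integrable_mult_right iP1)
    note d1 = set_integral_diff[OF iQL i1]
    note d2 = set_integral_diff[OF i3 i4]
    note d3 = set_integral_diff(2)[OF d1(1) d2(1)]
    show ?thesis
      unfolding d3 d1(2) d2(2) set_integral_mult_right P1_def Q1_def PL_def QL_def ..
  qed
  also have "r0 * Q1 - (m * r0) * P1 = 0" unfolding m_def using P1 by simp
  finally have Fint: "(LBINT x:{0<..}. F x) = QL - m * PL" by simp
  have "0 \<le> (LBINT x:{0<..}. F x)"
    unfolding set_lebesgue_integral_def
    by (rule Bochner_Integration.integral_nonneg) (auto simp: Fnn split: split_indicator)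
  hence "m * PL \<le> QL" using Fint by simp
  hence "P1 * (m * PL) \<le> P1 * QL" using P1 by (intro mult_left_mono) auto
  moreover have "P1 * (m * PL) = PL * Q1" unfolding m_def using P1 by simp
  ultimately show ?thesis by simp
qed


theorem lemma1:
  fixes \<alpha> :: real
  assumes "\<alpha> > 2"
  shows "antimono_on {0<..} (\<lambda>s. f_ratio \<alpha> s s)"
  unfolding monotone_on_def
proof (intro ballI impI)
  fix s s' :: real assume s: "s \<in> {0<..}" and s': "s' \<in> {0<..}" and le: "s \<le> s'"
  define b where "b = 2 / \<alpha>"
  have b: "b > 0" unfolding b_def using assms by simp
  define t where "t = s + s"
  define t' where "t' = s' + s'"
  have t: "t > 0" and t': "t' > 0" using s s' unfolding t_def t'_def by auto
  define lam where "lam = (t'/t) powr (1/b)"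
  have lam: "lam \<ge> 1" unfolding lam_def using t t' le b unfolding t_def t'_def
    by (intro ge_one_powr_ge_zero) auto
  define P1 where "P1 = (LBINT x:{0<..}. exp (-t * x powr b) / (1 + x))"
  define Q1 where "Q1 = (LBINT x:{0<..}. x powr b * exp (-t * x powr b) / (1 + x))"
  define PL where "PL = (LBINT x:{0<..}. exp (-t * x powr b) / (lam + x))"
  define QL where "QL = (LBINT x:{0<..}. x powr b * exp (-t * x powr b) / (lam + x))"
  have one: "(1::real) \<ge> 1" by simp
  have Q1: "Q1 > 0" unfolding Q1_def using pos_PQ(2)[OF b t one] .
  have QL: "QL > 0" unfolding QL_def using pos_PQ(2)[OF b t lam] .
  have ch: "PL * Q1 \<le> P1 * QL" unfolding P1_def Q1_def PL_def QL_def by (rule cheb[OF b t lam])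
  have fs: "f_ratio \<alpha> s s = P1 / (s * Q1)"
    unfolding f_ratio_def num_int_def den_int_def P1_def Q1_def t_def b_def ..
  have N': "num_int \<alpha> s' s' = PL"
    unfolding num_int_def PL_def lam_def t'_def[symmetric] b_def[symmetric] using scale(1)[OF b t t'] by simp
  have D': "t' * den_int \<alpha> s' s' = t * QL"
    unfolding den_int_def QL_def lam_def t'_def[symmetric] b_def[symmetric] using scale(2)[OF b t t'] by simp
  hence D'': "s' * den_int \<alpha> s' s' = s * QL" unfolding t_def t'_def by simp
  have fs': "f_ratio \<alpha> s' s' = PL / (s * QL)"
    unfolding f_ratio_def N' D'' ..
  have sp: "s > 0" using s by simp
  have "PL / (s * QL) = (PL * Q1) / (s * QL * Q1)" using Q1 by simp
  also have "\<dots> \<le> (P1 * QL) / (s * QL * Q1)" using ch sp Q1 QL by (intro divide_right_mono) auto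
  also have "\<dots> = P1 / (s * Q1)" using QL by simp
  finally show "f_ratio \<alpha> s' s' \<le> f_ratio \<alpha> s s" unfolding fs fs' .
qed

end
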